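(* Let $(A,\leq,\cdot,/)$ be a right-residuated magma satisfying condition (N), and let $B\subseteq A$ be closed under $\sqcap$. The following are equivalent: (1) $(B,\sqcap)$ is a left normal band, i.e. an idempotent semigroup satisfying $x\sqcap y\sqcap z = x\sqcap z\sqcap y$; (2) $(B,\sqcap)$ is a semigroup (i.e. $\sqcap$ is associative on $B$); (3) $(B,\sqcap)$ satisfies, for all $x,y,z\in B$, the identities $x\sqcap(y\sqcap x)=x\sqcap y$ and $(x\sqcap(y\sqcap z))\sqcap z = x\sqcap (y\sqcap z)$.
   Context: Write $xy$ for $x\cdot y$; $\cdot$ binds more strongly than $/$, and $/$ binds more strongly than $\sqcap$, where $x\sqcap y := (x/y)y$. A right-residuated magma is a structure $(A,\leq,\cdot,/)$ where $(A,\leq)$ is a poset and $xy\leq z\iff x\leq z/y$ for all $x,y,z\in A$. Condition (N): for all $x,y\in A$, $x\leq y\iff x = y\sqcap x$. *)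

theory Defs
  imports Main
begin

definition right_residuated_magma ::
  "('a \<Rightarrow> 'a \<Rightarrow> bool) \<Rightarrow> ('a \<Rightarrow> 'a \<Rightarrow> 'a) \<Rightarrow> ('a \<Rightarrow> 'a \<Rightarrow> 'a) \<Rightarrow> bool" where
  "right_residuated_magma le mult rdiv \<longleftrightarrow>
     (\<forall>x. le x x) \<and>
     (\<forall>x y. le x y \<and> le y x \<longrightarrow> x = y) \<and>
     (\<forall>x y z. le x y \<and> le y z \<longrightarrow> le x z) \<and>
     (\<forall>x y z. le (mult x y) z \<longleftrightarrow> le x (rdiv z y))"

definition rmeet :: "('a \<Rightarrow> 'a \<Rightarrow> 'a) \<Rightarrow> ('a \<Rightarrow> 'a \<Rightarrow> 'a) \<Rightarrow> 'a \<Rightarrow> 'a \<Rightarrow> 'a" where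
  "rmeet mult rdiv x y = mult (rdiv x y) y"

definition condN ::
  "('a \<Rightarrow> 'a \<Rightarrow> bool) \<Rightarrow> ('a \<Rightarrow> 'a \<Rightarrow> 'a) \<Rightarrow> ('a \<Rightarrow> 'a \<Rightarrow> 'a) \<Rightarrow> bool" where
  "condN le mult rdiv \<longleftrightarrow> (\<forall>x y. le x y \<longleftrightarrow> x = rmeet mult rdiv y x)"

definition left_normal_band_on :: "'a set \<Rightarrow> ('a \<Rightarrow> 'a \<Rightarrow> 'a) \<Rightarrow> bool" where
  "left_normal_band_on B m \<longleftrightarrow>
     (\<forall>x\<in>B. \<forall>y\<in>B. \<forall>z\<in>B. m (m x y) z = m x (m y z)) \<and>
     (\<forall>x\<in>B. m x x = x) \<and>
     (\<forall>x\<in>B. \<forall>y\<in>B. \<forall>z\<in>B. m (m x y) z = m (m x z) y)"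

definition semigroup_on :: "'a set \<Rightarrow> ('a \<Rightarrow> 'a \<Rightarrow> 'a) \<Rightarrow> bool" where
  "semigroup_on B m \<longleftrightarrow> (\<forall>x\<in>B. \<forall>y\<in>B. \<forall>z\<in>B. m (m x y) z = m x (m y z))"

end

theory Submission
  imports Defs
begin

locale absm =
  fixes le :: "'a \<Rightarrow> 'a \<Rightarrow> bool" and m :: "'a \<Rightarrow> 'a \<Rightarrow> 'a" and B :: "'a set"
  assumes refl: "\<And>x. le x x" and anti: "\<And>x y. le x y \<Longrightarrow> le y x \<Longrightarrow> x = y"
  and trans: "\<And>x y z. le x y \<Longrightarrow> le y z \<Longrightarrow> le x z"
  and F1: "\<And>x y. le (m x y) x"
  and N: "\<And>x y. le x y = (x = m y x)"
  and F5: "\<And>x y. m (m x y) y = m x y"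
  and G2: "\<And>u c z. m u c = u \<Longrightarrow> le u z \<Longrightarrow> le u (m z c)"
  and F4: "\<And>x y z. le x y \<Longrightarrow> le (m x z) (m y z)"
  and cl: "\<And>x y. x \<in> B \<Longrightarrow> y \<in> B \<Longrightarrow> m x y \<in> B"
begin
lemma idem: "m x x = x" using N refl by metis

lemma l3to2:
  assumes a: "\<And>x y. x \<in> B \<Longrightarrow> y \<in> B \<Longrightarrow> m x (m y x) = m x y"
  and b: "\<And>x y z. x \<in> B \<Longrightarrow> y \<in> B \<Longrightarrow> z \<in> B \<Longrightarrow> m (m x (m y z)) z = m x (m y z)"
  and x: "x \<in> B" and y: "y \<in> B" and z: "z \<in> B"
  shows "m (m x y) z = m x (m y z)"
proof -
  have H: "\<And>u c. u \<in> B \<Longrightarrow> c \<in> B \<Longrightarrow> le u c \<Longrightarrow> m u c = u"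
    by (metis N a idem)
  have b2: "\<And>w c d. w \<in> B \<Longrightarrow> c \<in> B \<Longrightarrow> d \<in> B \<Longrightarrow> m c d = c \<Longrightarrow> m (m w c) d = m w c"
    by (metis b)
  have qy: "m (m x (m y z)) y = m x (m y z)" by (smt (verit) a b cl x y z)
  have q1: "le (m x (m y z)) (m (m x y) z)"
    by (simp add: F1 G2 b qy x y z)
  have "m (m (m x y) z) (m y z) = m (m x y) z"
    by (smt (verit, ccfv_threshold) F1 F4 N a b cl x y z)
  then have q2: "le (m (m x y) z) (m x (m y z))"
    by (meson F1 G2 local.trans)
  show ?thesis using q1 q2 anti by blast
qed

lemma l2to1:
  assumes as: "\<And>x y z. x \<in> B \<Longrightarrow> y \<in> B \<Longrightarrow> z \<in> B \<Longrightarrow> m (m x y) z = m x (m y z)"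
  and x: "x \<in> B" and y: "y \<in> B"
  shows "m x (m y x) = m x y"
  by (smt (verit) absm_axioms absm_def as x y)

lemma l2to1b:
  assumes as: "\<And>x y z. x \<in> B \<Longrightarrow> y \<in> B \<Longrightarrow> z \<in> B \<Longrightarrow> m (m x y) z = m x (m y z)"
  and x: "x \<in> B" and y: "y \<in> B" and z: "z \<in> B"
  shows "m (m x y) z = m (m x z) y"
proof -
  have lr: "\<And>x y. x \<in> B \<Longrightarrow> y \<in> B \<Longrightarrow> m x (m y x) = m x y"
    using l2to1 as by blast
  have "le (m (m x y) z) (m x z)" by (simp add: F1 F4)
  hence "m (m x y) z = m (m x z) (m (m x y) z)" using N by blast
  also have "\<dots> = m (m (m x z) x) (m y z)" using as cl x y z by metis
  also have "\<dots> = m (m x z) (m y z)" using as lr x z by metis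
  also have "\<dots> = m x (m z (m y z))" using as cl x y z by metis
  also have "\<dots> = m x (m z y)" using lr y z by metis
  also have "\<dots> = m (m x z) y" using as x y z by metis
  finally show ?thesis .
qed
end

lemma absm_inst:
  assumes "right_residuated_magma le mult rdiv"
    and "condN le mult rdiv"
    and "\<forall>x\<in>B. \<forall>y\<in>B. rmeet mult rdiv x y \<in> B"
  shows "absm le (rmeet mult rdiv) B"
proof -
  have refl: "\<And>x. le x x" and anti: "\<And>x y. le x y \<Longrightarrow> le y x \<Longrightarrow> x = y"
  and trans: "\<And>x y z. le x y \<Longrightarrow> le y z \<Longrightarrow> le x z"
  and res: "\<And>x y z. le (mult x y) z = le x (rdiv z y)"
    using assms(1) unfolding right_residuated_magma_def by blast+
  have mono: "\<And>a b c. le a b \<Longrightarrow> le (mult a c) (mult b c)"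
    by (meson refl res trans)
  have rmono: "\<And>a b c. le a b \<Longrightarrow> le (rdiv a c) (rdiv b c)"
    by (meson refl res trans)
  show ?thesis
  proof
    show "\<And>x y. le (rmeet mult rdiv x y) x" unfolding rmeet_def using res refl by blast
    show "\<And>x y. le x y = (x = rmeet mult rdiv y x)" using assms(2) unfolding condN_def by blast
    show "\<And>x y. rmeet mult rdiv (rmeet mult rdiv x y) y = rmeet mult rdiv x y"
      unfolding rmeet_def by (meson anti mono refl res)
    show "\<And>u c z. rmeet mult rdiv u c = u \<Longrightarrow> le u z \<Longrightarrow> le u (rmeet mult rdiv z c)"
      unfolding rmeet_def by (metis mono rmono res refl)
    show "\<And>x y z. le x y \<Longrightarrow> le (rmeet mult rdiv x z) (rmeet mult rdiv y z)"
      unfolding rmeet_def by (meson mono rmono res refl trans)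
  qed (use refl anti trans assms(3) in blast)+
qed

theorem mainTheorem3:
  fixes le :: "'a \<Rightarrow> 'a \<Rightarrow> bool" and mult rdiv :: "'a \<Rightarrow> 'a \<Rightarrow> 'a" and B :: "'a set"
  assumes "right_residuated_magma le mult rdiv"
    and "condN le mult rdiv"
    and "\<forall>x\<in>B. \<forall>y\<in>B. rmeet mult rdiv x y \<in> B"
  shows "(left_normal_band_on B (rmeet mult rdiv) \<longleftrightarrow> semigroup_on B (rmeet mult rdiv))
       \<and> (semigroup_on B (rmeet mult rdiv) \<longleftrightarrow>
          (\<forall>x\<in>B. \<forall>y\<in>B. \<forall>z\<in>B.
             rmeet mult rdiv x (rmeet mult rdiv y x) = rmeet mult rdiv x y \<and>
             rmeet mult rdiv (rmeet mult rdiv x (rmeet mult rdiv y z)) z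
               = rmeet mult rdiv x (rmeet mult rdiv y z)))"
proof -
  interpret absm le "rmeet mult rdiv" B using absm_inst[OF assms] .
  let ?m = "rmeet mult rdiv"
  have A: "semigroup_on B ?m \<Longrightarrow> left_normal_band_on B ?m"
    unfolding semigroup_on_def left_normal_band_on_def using l2to1b idem by blast
  have C: "semigroup_on B ?m \<Longrightarrow> (\<forall>x\<in>B. \<forall>y\<in>B. \<forall>z\<in>B. ?m x (?m y x) = ?m x y \<and>
             ?m (?m x (?m y z)) z = ?m x (?m y z))"
    unfolding semigroup_on_def using l2to1 F5 cl by metis
  have D: "(\<forall>x\<in>B. \<forall>y\<in>B. \<forall>z\<in>B. ?m x (?m y x) = ?m x y \<and>
             ?m (?m x (?m y z)) z = ?m x (?m y z)) \<Longrightarrow> semigroup_on B ?m"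
    unfolding semigroup_on_def using l3to2 by blast
  show ?thesis using A C D unfolding left_normal_band_on_def semigroup_on_def by blast
qed

end
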